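(* Let $p$ be a prime, $k,t\ge0$ integers, and $a,b,h$ integers with $\gcd(ab,p)=1$. Then $|R^\ast_{p^t,b}(p^k,a,h)|\le\gcd(h,p^k)$.
   Context: $e(z)=e^{2\pi iz}$. For positive integers $q,W$ and integers $a,b,h$, $R^\ast_{W,b}(q,a,h)=\sum_{1\le c\le qW,\ \gcd(c,q)=1,\ c\equiv b\ (\mathrm{mod}\ W)}e\big(\frac{ach}{qW}\big)$. Here $\gcd(0,n)=n$. *)

theory Defs
  imports "HOL-Analysis.Analysis"
begin

definition e_fun :: "real \<Rightarrow> complex" where
  "e_fun z = exp (2 * pi * \<i> * complex_of_real z)"

definition Rstar :: "nat \<Rightarrow> int \<Rightarrow> nat \<Rightarrow> int \<Rightarrow> int \<Rightarrow> complex" where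
  "Rstar W b q a h =
     (\<Sum>c \<in> {c::int. 1 \<le> c \<and> c \<le> int q * int W \<and> gcd c (int q) = 1 \<and> c mod int W = b mod int W}.
        e_fun (real_of_int (a * c * h) / real (q * W)))"

end

theory Submission
  imports Defs
begin

lemma e_add: "e_fun (x + y) = e_fun x * e_fun y"
  unfolding e_fun_def by (simp add: distrib_left exp_add)

lemma e_int: "e_fun (real_of_int n) = 1"
  unfolding e_fun_def using exp_integer_2pi[of "of_int n"]
  by (simp add: mult.commute mult.left_commute)

lemma e_norm: "norm (e_fun x) = 1"
  unfolding e_fun_def by (simp add: norm_exp_eq_Re)

lemma e_one_iff: "e_fun x = 1 \<longleftrightarrow> x \<in> \<int>"
proof
  assume "e_fun x = 1"
  then obtain n :: int where "2 * pi * x = of_int (2*n) * pi"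
    unfolding e_fun_def exp_eq_1 by auto
  then have "x = of_int n" by simp
  then show "x \<in> \<int>" by simp
next
  assume "x \<in> \<int>" then obtain n where "x = of_int n" by (auto elim: Ints_cases)
  then show "e_fun x = 1" using e_int by simp
qed

lemma e_pow: "e_fun (real j * x) = e_fun x ^ j"
  unfolding e_fun_def by (metis exp_of_nat_mult mult.left_commute of_real_mult of_real_of_nat_eq)

lemma geo0:
  fixes m :: nat and n :: int assumes "m > 0"
  shows "(\<Sum>j<m. e_fun (real_of_int (int j * n) / real m)) = (if int m dvd n then of_nat m else 0)"
proof -
  define z where "z = e_fun (real_of_int n / real m)"
  have eq: "e_fun (real_of_int (int j * n) / real m) = z ^ j" for j
    unfolding z_def e_pow[symmetric] by (simp add: mult.commute)
  have zm: "z ^ m = 1" using eq[of m] assms e_int[of n] by simp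
  have z1: "z = 1 \<longleftrightarrow> int m dvd n"
  proof
    assume "z = 1"
    then obtain r where "real_of_int n / real m = of_int r" unfolding z_def e_one_iff by (auto elim: Ints_cases)
    then have "real_of_int n = of_int (int m * r)" using assms by (simp add: field_simps)
    then have "n = int m * r" by linarith
    then show "int m dvd n" by simp
  next
    assume "int m dvd n" then obtain r where "n = int m * r" by auto
    then have "real_of_int n / real m = of_int r" using assms by simp
    then show "z = 1" unfolding z_def using e_int by simp
  qed
  show ?thesis
  proof (cases "int m dvd n")
    case True then show ?thesis using z1 eq by simp
  next
    case False then have "z \<noteq> 1" using z1 by simp
    then have "(\<Sum>j<m. z ^ j) = 0" using geometric_sum[of z m] zm by simp
    then show ?thesis using eq False by simp
  qed
qed
lemma geo1:
  fixes m :: nat and n :: int assumes "m > 0"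
  shows "(\<Sum>c\<in>{1..int m}. e_fun (real_of_int (c * n) / real m)) = (if int m dvd n then of_nat m else 0)"
proof -
  define f where "f c = e_fun (real_of_int (c * n) / real m)" for c
  have f0: "f 0 = 1" unfolding f_def using e_int[of 0] by simp
  have fm: "f (int m) = 1" unfolding f_def using e_int[of n] assms by simp
  have A: "sum f {0..int m} = sum f {1..int m} + f 0"
  proof -
    have "{0..int m} = insert 0 {1..int m}" by auto
    then show ?thesis by simp
  qed
  have B: "sum f {0..int m} = sum f {0..<int m} + f (int m)"
  proof -
    have "{0..int m} = insert (int m) {0..<int m}" by auto
    then show ?thesis by simp
  qed
  have C: "sum f {0..<int m} = (\<Sum>j<m. f (int j))"
  proof -
    have "{0..<int m} = int ` {..<m}" apply (auto simp: image_iff) by (metis lessThan_iff nat_0_le nat_less_iff)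
    then show ?thesis by (simp add: sum.reindex)
  qed
  have "sum f {1..int m} = (\<Sum>j<m. f (int j))" using A B C f0 fm by simp
  then show ?thesis unfolding f_def using geo0[OF assms, of n] by simp
qed
lemma final_bound:
  fixes q :: nat and a h :: int
  assumes "q > 0" "coprime a (int q)"
  shows "norm (if int q dvd a * h then (of_nat q :: complex) else 0) \<le> real_of_int (gcd h (int q))"
proof (cases "int q dvd a * h")
  case True
  then have "int q dvd h" using assms(2) by (metis coprime_commute coprime_dvd_mult_right_iff)
  then have "gcd h (int q) = int q" by (simp add: gcd_proj2_iff)
  then show ?thesis using True by simp
next
  case False then show ?thesis by simp
qed

lemma case_t_pos:
  fixes p k t :: nat and a b h :: int
  assumes "prime p" and cop: "gcd (a * b) (int p) = 1" and "t > 0"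
  shows "norm (Rstar (p ^ t) b (p ^ k) a h) \<le> real_of_int (gcd h (int p ^ k))"
proof -
  define W where "W = p ^ t"
  define q where "q = p ^ k"
  have p0: "p > 1" using assms(1) prime_gt_1_nat by blast
  have W0: "W > 0" and q0: "q > 0" using p0 unfolding W_def q_def by auto
  have ca: "coprime a (int p)" and cb: "coprime b (int p)" using cop
    by (simp_all add: coprime_iff_gcd_eq_1[symmetric] coprime_mult_left_iff)
  have pW: "int p dvd int W" unfolding W_def using assms(3) by (simp add: dvd_power)
  define b0 where "b0 = b mod int W"
  have b0r: "0 \<le> b0" "b0 < int W" unfolding b0_def using W0 by auto
  have b0ne: "b0 \<noteq> 0"
  proof
    assume "b0 = 0"
    then have "int W dvd b" unfolding b0_def by auto
    then have "int p dvd b" using pW dvd_trans by blast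
    then show False using cb p0
      by (metis coprime_common_divisor dvd_refl of_nat_1 of_nat_eq_iff less_irrefl abs_of_nat int_ops(1) zdvd1_eq nat_int of_nat_less_iff)
  qed
  define S where "S = {c::int. 1 \<le> c \<and> c \<le> int q * int W \<and> gcd c (int q) = 1 \<and> c mod int W = b mod int W}"
  have S: "S = (\<lambda>j. b0 + int W * int j) ` {..<q}"
  proof
    show "S \<subseteq> (\<lambda>j. b0 + int W * int j) ` {..<q}"
    proof
      fix c assume "c \<in> S"
      then have c: "1 \<le> c" "c \<le> int q * int W" "c mod int W = b0" unfolding S_def b0_def by auto
      define j where "j = c div int W"
      have cj: "c = b0 + int W * j" using c(3) unfolding j_def by (metis mod_div_mult_eq mult.commute add.commute)
      have j0: "j \<ge> 0" unfolding j_def using c W0 by (simp add: pos_imp_zdiv_nonneg_iff)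
      have "int W * j + b0 \<le> int W * int q" using cj c(2) by (simp add: add.commute mult.commute)
      then have "int W * j < int W * int q" using b0ne b0r by linarith
      then have jq: "j < int q" using W0 by (simp add: mult_less_cancel_left)
      show "c \<in> (\<lambda>j. b0 + int W * int j) ` {..<q}"
        using cj j0 jq by (auto simp: image_iff intro!: bexI[of _ "nat j"])
    qed
  next
    show "(\<lambda>j. b0 + int W * int j) ` {..<q} \<subseteq> S"
    proof
      fix c assume "c \<in> (\<lambda>j. b0 + int W * int j) ` {..<q}"
      then obtain j where j: "j < q" "c = b0 + int W * int j" by auto
      have "0 \<le> int W * int j" by simp
      then have c1: "1 \<le> c" using j b0r b0ne by linarith
      have "int W * int j \<le> int W * (int q - 1)" using j W0 by simp
      then have c2: "c \<le> int q * int W" using j b0r by (simp add: algebra_simps)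
      have c3: "c mod int W = b mod int W" using j b0r unfolding b0_def by simp
      have "c mod int p = b mod int p" using c3 pW by (metis mod_mod_cancel)
      then have "gcd c (int p) = gcd b (int p)" by (metis gcd_red_int gcd.commute)
      then have "coprime c (int p)" using cb by (simp add: coprime_iff_gcd_eq_1)
      then have "coprime c (int q)" unfolding q_def by simp
      then show "c \<in> S" unfolding S_def using c1 c2 c3 by auto
    qed
  qed
  have inj: "inj_on (\<lambda>j. b0 + int W * int j) {..<q}" using W0 by (auto simp: inj_on_def)
  have "Rstar W b q a h = (\<Sum>c\<in>S. e_fun (real_of_int (a * c * h) / real (q * W)))"
    unfolding Rstar_def S_def by simp
  also have "\<dots> = (\<Sum>j<q. e_fun (real_of_int (a * (b0 + int W * int j) * h) / real (q * W)))"
    unfolding S by (simp add: sum.reindex[OF inj])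
  also have "\<dots> = (\<Sum>j<q. e_fun (real_of_int (a * b0 * h) / real (q * W)) * e_fun (real_of_int (int j * (a * h)) / real q))"
  proof (rule sum.cong[OF refl])
    fix j assume "j \<in> {..<q}"
    have "real_of_int (a * (b0 + int W * int j) * h) / real (q * W) =
      real_of_int (a * b0 * h) / real (q * W) + real_of_int (int j * (a * h)) / real q"
      using W0 q0 by (simp add: field_simps)
    then show "e_fun (real_of_int (a * (b0 + int W * int j) * h) / real (q * W)) =
      e_fun (real_of_int (a * b0 * h) / real (q * W)) * e_fun (real_of_int (int j * (a * h)) / real q)"
      by (simp add: e_add)
  qed
  also have "\<dots> = e_fun (real_of_int (a * b0 * h) / real (q * W)) * (if int q dvd a * h then of_nat q else 0)"
    by (simp only: sum_distrib_left[symmetric] geo0[OF q0])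
  finally have "norm (Rstar W b q a h) = norm (if int q dvd a * h then (of_nat q :: complex) else 0)"
    by (simp add: norm_mult e_norm)
  also have "\<dots> \<le> real_of_int (gcd h (int q))"
    using final_bound[OF q0] ca unfolding q_def by simp
  finally show ?thesis unfolding W_def q_def by simp
qed
lemma case_t0_k0:
  fixes a b h :: int
  shows "norm (Rstar (p ^ 0) b (p ^ 0) a h) \<le> real_of_int (gcd h (int p ^ 0))"
proof -
  have "{c::int. 1 \<le> c \<and> c \<le> int 1 * int 1 \<and> gcd c (int 1) = 1 \<and> c mod int 1 = b mod int 1} = {1}" by auto
  then show ?thesis unfolding Rstar_def by (simp add: e_norm)
qed

lemma case_t0:
  fixes p k :: nat and a b h :: int
  assumes "prime p" and cop: "gcd (a * b) (int p) = 1" and "k > 0"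
  shows "norm (Rstar (p ^ 0) b (p ^ k) a h) \<le> real_of_int (gcd h (int p ^ k))"
proof -
  define q where "q = p ^ k"
  define r where "r = p ^ (k - 1)"
  have p0: "p > 1" using assms(1) prime_gt_1_nat by blast
  have q0: "q > 0" and r0: "r > 0" using p0 unfolding r_def q_def by auto
  have qr: "q = p * r" unfolding q_def r_def using assms(3) by (simp add: power_eq_if)
  have ca: "coprime a (int p)" using cop
    by (simp_all add: coprime_iff_gcd_eq_1[symmetric] coprime_mult_left_iff)
  have pi: "prime (int p)" using assms(1) by simp
  define S where "S = {c::int. 1 \<le> c \<and> c \<le> int q * int 1 \<and> gcd c (int q) = 1 \<and> c mod int 1 = b mod int 1}"
  define T where "T = (\<lambda>j. int p * j) ` {1..int r}"
  have TA: "T \<subseteq> {1..int q}"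
  proof
    fix c assume "c \<in> T"
    then obtain j where j: "1 \<le> j" "j \<le> int r" "c = int p * j" unfolding T_def by auto
    have "1 * 1 \<le> int p * j" using j p0 by (intro mult_mono) auto
    moreover have "int p * j \<le> int p * int r" using j p0 by (intro mult_left_mono) auto
    ultimately show "c \<in> {1..int q}" using j unfolding qr by simp
  qed
  have S: "S = {1..int q} - T"
  proof -
    have G: "gcd c (int q) = 1 \<longleftrightarrow> \<not> int p dvd c" for c
    proof -
      have "gcd c (int q) = 1 \<longleftrightarrow> coprime c (int p)"
        unfolding q_def using assms(3) by (simp add: coprime_iff_gcd_eq_1[symmetric])
      also have "\<dots> \<longleftrightarrow> \<not> int p dvd c"
        proof
          assume "coprime c (int p)"
          show "\<not> int p dvd c"
          proof
            assume "int p dvd c"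
            then have "is_unit (int p)" by (rule coprime_common_divisor[OF \<open>coprime c (int p)\<close>]) simp
            then show False using pi by simp
          qed
        next
          assume "\<not> int p dvd c"
          then show "coprime c (int p)" using prime_imp_coprime[OF pi] by (simp add: coprime_commute)
        qed
      finally show ?thesis .
    qed
    have M: "c \<in> T \<longleftrightarrow> int p dvd c \<and> 1 \<le> c \<and> c \<le> int q" for c
    proof
      assume "c \<in> T" then show "int p dvd c \<and> 1 \<le> c \<and> c \<le> int q" using TA unfolding T_def by auto
    next
      assume h: "int p dvd c \<and> 1 \<le> c \<and> c \<le> int q"
      then obtain j where j: "c = int p * j" by auto
      have "0 < int p * j" using h j by simp
      then have "0 < j" using p0 by (simp add: zero_less_mult_iff)
      then have "1 \<le> j" by simp
      moreover have "int p * j \<le> int p * int r" using h j qr by simp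
      then have "j \<le> int r" using p0 by (simp add: mult_le_cancel_left)
      ultimately show "c \<in> T" unfolding T_def using j by auto
    qed
    show ?thesis unfolding S_def
    proof (rule set_eqI)
      fix c
      show "c \<in> {c. 1 \<le> c \<and> c \<le> int q * int 1 \<and> gcd c (int q) = 1 \<and> c mod int 1 = b mod int 1} \<longleftrightarrow> c \<in> {1..int q} - T"
        using G[of c] M[of c] by (simp, blast)
    qed
  qed
  define f where "f c = e_fun (real_of_int (c * (a * h)) / real q)" for c
  have "Rstar 1 b q a h = sum f S"
    unfolding Rstar_def S_def f_def by (auto intro!: sum.cong simp: mult.commute mult.left_commute)
  also have "\<dots> = sum f {1..int q} - sum f T"
    unfolding S using TA by (simp add: sum_diff)
  also have "sum f T = (\<Sum>j\<in>{1..int r}. e_fun (real_of_int (j * (a * h)) / real r))"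
  proof -
    have inj: "inj_on (\<lambda>j. int p * j) {1..int r}" using p0 by (auto simp: inj_on_def)
    have "sum f T = (\<Sum>j\<in>{1..int r}. f (int p * j))" unfolding T_def by (simp add: sum.reindex[OF inj])
    also have "\<dots> = (\<Sum>j\<in>{1..int r}. e_fun (real_of_int (j * (a * h)) / real r))"
    proof (rule sum.cong[OF refl])
      fix j assume "j \<in> {1..int r}"
      have "real_of_int (int p * j * (a * h)) / real q = real_of_int (j * (a * h)) / real r"
        unfolding qr using p0 by (simp add: field_simps)
      then show "f (int p * j) = e_fun (real_of_int (j * (a * h)) / real r)" unfolding f_def by simp
    qed
    finally show ?thesis .
  qed
  also have "sum f {1..int q} = (if int q dvd a * h then of_nat q else 0)"
    unfolding f_def by (rule geo1[OF q0])
  also have "(\<Sum>j\<in>{1..int r}. e_fun (real_of_int (j * (a * h)) / real r)) = (if int r dvd a * h then of_nat r else 0)"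
    by (rule geo1[OF r0])
  finally have R: "Rstar 1 b q a h = (if int q dvd a * h then of_nat q else 0) - (if int r dvd a * h then of_nat r else 0)" .
  have cq: "coprime (int q) a" "coprime (int r) a" using ca unfolding q_def r_def by (simp_all add: coprime_commute)
  have dvq: "int q dvd a * h \<longleftrightarrow> int q dvd h" by (rule coprime_dvd_mult_right_iff[OF cq(1)])
  have dvr: "int r dvd a * h \<longleftrightarrow> int r dvd h" by (rule coprime_dvd_mult_right_iff[OF cq(2)])
  have rq: "int r dvd int q" unfolding qr by simp
  have gpos: "gcd h (int q) > 0" using q0 by simp
  have "norm (Rstar 1 b q a h) \<le> real_of_int (gcd h (int q))"
  proof (cases "int r dvd h")
    case False
    then have "\<not> int q dvd h" using rq dvd_trans by blast
    then show ?thesis using R dvq dvr False gpos by simp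
  next
    case rh: True
    then have rg: "int r dvd gcd h (int q)" using rq by simp
    then have rle: "int r \<le> gcd h (int q)" using gpos by (simp add: zdvd_imp_le)
    show ?thesis
    proof (cases "int q dvd h")
      case True
      then have "gcd h (int q) = int q" by (simp add: gcd_proj2_iff)
      moreover have "norm (of_nat q - of_nat r :: complex) \<le> real q"
      proof -
        have "r \<le> q" unfolding qr using p0 by simp
        then have "(of_nat q - of_nat r :: complex) = of_nat (q - r)" by (simp add: of_nat_diff)
        then show ?thesis by simp
      qed
      ultimately show ?thesis using R dvq dvr True rh by simp
    next
      case False
      then show ?thesis using R dvq dvr rh rle by simp
    qed
  qed
  then show ?thesis unfolding q_def by simp
qed
theorem lemma2p10:
  fixes p k t :: nat and a b h :: int
  assumes "prime p" and "gcd (a * b) (int p) = 1"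
  shows "norm (Rstar (p ^ t) b (p ^ k) a h) \<le> real_of_int (gcd h (int p ^ k))"
proof (cases "t > 0")
  case True then show ?thesis using case_t_pos[OF assms] by simp
next
  case False
  then have t: "t = 0" by simp
  show ?thesis
  proof (cases "k > 0")
    case True then show ?thesis using case_t0[OF assms] t by simp
  next
    case False then show ?thesis using case_t0_k0 t by simp
  qed
qed

end
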